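(* Let $R$ be a nontrivial finite commutative ring, $\Sigma$ an alphabet, and $r\in R\langle\langle\Sigma^*\rangle\rangle$ a series that is rational over $R$. Then $r\in\mathrm{Rev}(R,\Sigma)$ if and only if $\mathrm{supp}(r+x\cdot\underline{\Sigma^*})\in\mathrm{RevL}(R,\Sigma)$ for all $x\in R$, where $x\cdot\underline{\Sigma^*}$ denotes the series with coefficient $x$ at every word of $\Sigma^*$.
   Context: A ring is a semiring $(R,+,\cdot,0,1)$ whose additive monoid is an abelian group; nontrivial means $0\neq1$. For a semiring $S$ and finite nonempty alphabet $\Sigma$, a series is a map $r\colon\Sigma^*\to S$ with value $(r,w)$; the set of series is $S\langle\langle\Sigma^*\rangle\rangle$ with pointwise addition; the support is $\mathrm{supp}(r)=\{w\mid(r,w)\neq0\}$. A weighted automaton over $S$ and $\Sigma$ is $\mathcal{A}=(Q,\sigma,\iota,\tau)$ with $Q$ finite, $\sigma\colon Q\times\Sigma\times Q\to S$, $\iota,\tau\colon Q\to S$; a run on $w=a_1\cdots a_t$ is $q_0a_1q_1\cdots a_tq_t$ with all $\sigma(q_{k-1},a_k,q_k)\neq0$, of weight $\iota(q_0)\sigma(q_0,a_1,q_1)\cdots\sigma(q_{t-1},a_t,q_t)\tau(q_t)$, and $(\|\mathcal{A}\|,w)$ is the sum of weights of all runs on $w$. A series is rational over $S$ if it equals $\|\mathcal{A}\|$ for some weighted automaton $\mathcal{A}$ over $S$. $\mathcal{A}$ is reversible if for all $p,p',q,q'\in Q$, $a\in\Sigma$: $\sigma(p,a,q)\neq0\neq\sigma(p,a,q')$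 implies $q=q'$, and $\sigma(p,a,q)\neq0\neq\sigma(p',a,q)$ implies $p=p'$. $\mathrm{Rev}(S,\Sigma)$ is the set of series realised by reversible weighted automata over $S$ and $\Sigma$, and $\mathrm{RevL}(S,\Sigma)=\{\mathrm{supp}(r)\mid r\in\mathrm{Rev}(S,\Sigma)\}$. *)

theory Defs
  imports Main
begin

text \<open>Weighted automata over a semiring 'r and a finite alphabet given by the
finite type 'a (so the alphabet is UNIV :: 'a set and words are 'a list).\<close>

record ('a, 'r) wa =
  states :: "nat set"
  trans  :: "nat \<Rightarrow> 'a \<Rightarrow> nat \<Rightarrow> 'r"
  init   :: "nat \<Rightarrow> 'r"
  fin    :: "nat \<Rightarrow> 'r"

definition wf_wa :: "('a, 'r::zero) wa \<Rightarrow> bool" where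
  "wf_wa A \<longleftrightarrow> finite (states A)"

definition runs :: "('a, 'r::zero) wa \<Rightarrow> 'a list \<Rightarrow> nat list set" where
  "runs A w = {qs. length qs = Suc (length w) \<and> set qs \<subseteq> states A \<and>
      (\<forall>k < length w. trans A (qs ! k) (w ! k) (qs ! Suc k) \<noteq> 0)}"

definition run_weight :: "('a, 'r::semiring_1) wa \<Rightarrow> 'a list \<Rightarrow> nat list \<Rightarrow> 'r" where
  "run_weight A w qs =
     init A (qs ! 0) * prod_list (map (\<lambda>k. trans A (qs ! k) (w ! k) (qs ! Suc k)) [0..<length w])
       * fin A (qs ! length w)"

definition behaviour :: "('a, 'r::semiring_1) wa \<Rightarrow> 'a list \<Rightarrow> 'r" where
  "behaviour A w = (\<Sum>qs\<in>runs A w. run_weight A w qs)"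

definition rational :: "('a list \<Rightarrow> 'r::semiring_1) \<Rightarrow> bool" where
  "rational r \<longleftrightarrow> (\<exists>A. wf_wa A \<and> behaviour A = r)"

definition reversible :: "('a, 'r::zero) wa \<Rightarrow> bool" where
  "reversible A \<longleftrightarrow>
     (\<forall>p\<in>states A. \<forall>p'\<in>states A. \<forall>q\<in>states A. \<forall>q'\<in>states A. \<forall>a.
        (trans A p a q \<noteq> 0 \<and> trans A p a q' \<noteq> 0 \<longrightarrow> q = q') \<and>
        (trans A p a q \<noteq> 0 \<and> trans A p' a q \<noteq> 0 \<longrightarrow> p = p'))"

definition Rev :: "('a list \<Rightarrow> 'r::semiring_1) set" where
  "Rev = {r. \<exists>A. wf_wa A \<and> reversible A \<and> behaviour A = r}"

definition supp :: "('a list \<Rightarrow> 'r::zero) \<Rightarrow> 'a list set" where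
  "supp r = {w. r w \<noteq> 0}"

text \<open>RevL TYPE('r): supports of reversibly realisable series over semiring 'r.\<close>
definition RevL :: "'r::semiring_1 itself \<Rightarrow> ('a list set) set" where
  "RevL _ = {L. \<exists>r :: 'a list \<Rightarrow> 'r. r \<in> Rev \<and> L = supp r}"

end

theory Submission
  imports Defs "HOL-Library.FuncSet"
begin

lemma prod_list_zero': "(0::'b::{monoid_mult,mult_zero}) \<in> set xs \<Longrightarrow> prod_list xs = 0"
  by (induction xs) auto

lemma hd_len: "length x = Suc n \<Longrightarrow> hd x = x ! 0"
  by (cases x) auto

definition seqs :: "nat set \<Rightarrow> nat \<Rightarrow> nat list set" where
  "seqs Q n = {qs. length qs = Suc n \<and> set qs \<subseteq> Q}"

fun bw :: "('a,'r::semiring_1) wa \<Rightarrow> nat \<Rightarrow> 'a list \<Rightarrow> 'r" where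
  "bw A p [] = fin A p"
| "bw A p (a#w) = (\<Sum>q\<in>states A. trans A p a q * bw A q w)"

definition pw :: "('a,'r::semiring_1) wa \<Rightarrow> 'a list \<Rightarrow> nat list \<Rightarrow> 'r" where
  "pw A w qs = prod_list (map (\<lambda>k. trans A (qs ! k) (w ! k) (qs ! Suc k)) [0..<length w]) * fin A (qs ! length w)"

lemma pw_Cons: "qs \<noteq> [] \<Longrightarrow> pw A (a#w) (p#qs) = trans A p a (hd qs) * pw A w qs"
proof -
  assume "qs \<noteq> []"
  have "[0..<length (a#w)] = 0 # map Suc [0..<length w]"
    by (simp only: length_Cons map_Suc_upt upt_conv_Cons[OF zero_less_Suc])
  then show ?thesis using \<open>qs \<noteq> []\<close>
    by (simp add: pw_def o_def hd_conv_nth mult.assoc)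
qed

lemma seqs_0: "seqs Q 0 = (\<lambda>q. [q]) ` Q"
  unfolding seqs_def by (auto simp: length_Suc_conv)

lemma seqs_Suc: "seqs Q (Suc n) = (\<lambda>(p,qs). p#qs) ` (Q \<times> seqs Q n)"
proof (intro set_eqI iffI)
  fix x assume "x \<in> seqs Q (Suc n)"
  then obtain p qs where "x = p # qs" "p \<in> Q" "qs \<in> seqs Q n"
    unfolding seqs_def by (cases x) auto
  then show "x \<in> (\<lambda>(p,qs). p#qs) ` (Q \<times> seqs Q n)" by force
qed (auto simp: seqs_def)

lemma finite_seqs: "finite Q \<Longrightarrow> finite (seqs Q n)"
  unfolding seqs_def by (rule rev_finite_subset[OF finite_lists_length_eq[of Q "Suc n"]]) auto

lemma main_sum:
  assumes "finite (states A)"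
  shows "(\<Sum>qs\<in>seqs (states A) (length w). g (hd qs) * pw A w qs) = (\<Sum>q\<in>states A. g q * bw A q w)"
  using assms
proof (induction w arbitrary: g)
  case Nil
  then show ?case by (simp add: seqs_0 sum.reindex inj_on_def pw_def)
next
  case (Cons a w)
  have inj: "inj_on (\<lambda>(p,qs). p#qs) (states A \<times> seqs (states A) (length w))"
    by (auto simp: inj_on_def)
  have ne: "\<And>qs. qs \<in> seqs (states A) (length w) \<Longrightarrow> qs \<noteq> []"
    by (auto simp: seqs_def)
  have "(\<Sum>qs\<in>seqs (states A) (length (a#w)). g (hd qs) * pw A (a#w) qs)
      = (\<Sum>(p,qs)\<in>states A \<times> seqs (states A) (length w). g p * pw A (a#w) (p#qs))"
    by (simp only: length_Cons seqs_Suc sum.reindex[OF inj] comp_def) (simp add: split_def)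
  also have "\<dots> = (\<Sum>p\<in>states A. \<Sum>qs\<in>seqs (states A) (length w). g p * (trans A p a (hd qs) * pw A w qs))"
    by (subst sum.cartesian_product[symmetric]) (intro sum.cong, auto simp: pw_Cons ne)
  also have "\<dots> = (\<Sum>p\<in>states A. g p * (\<Sum>qs\<in>seqs (states A) (length w). trans A p a (hd qs) * pw A w qs))"
    by (simp add: sum_distrib_left)
  also have "\<dots> = (\<Sum>p\<in>states A. g p * bw A p (a#w))"
    using Cons by simp
  finally show ?case .
qed

lemma behaviour_bw:
  assumes "finite (states A)"
  shows "behaviour A w = (\<Sum>p\<in>states A. init A p * bw A p w)"
proof -
  have sub: "runs A w \<subseteq> seqs (states A) (length w)"
    by (auto simp: runs_def seqs_def)
  have z: "run_weight A w qs = 0" if "qs \<in> seqs (states A) (length w) - runs A w" for qs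
  proof -
    from that obtain k where k: "k < length w" "trans A (qs ! k) (w ! k) (qs ! Suc k) = 0"
      by (auto simp: runs_def seqs_def)
    then have "prod_list (map (\<lambda>k. trans A (qs ! k) (w ! k) (qs ! Suc k)) [0..<length w]) = 0"
      by (intro prod_list_zero') force
    then show ?thesis by (simp add: run_weight_def)
  qed
  have "behaviour A w = (\<Sum>qs\<in>seqs (states A) (length w). run_weight A w qs)"
    unfolding behaviour_def
    by (rule sum.mono_neutral_left[OF finite_seqs[OF assms] sub]) (use z in auto)
  also have "\<dots> = (\<Sum>qs\<in>seqs (states A) (length w). init A (hd qs) * pw A w qs)"
    by (intro sum.cong) (auto simp: run_weight_def pw_def seqs_def hd_len mult.assoc)
  also have "\<dots> = (\<Sum>p\<in>states A. init A p * bw A p w)"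
    by (rule main_sum[OF assms])
  finally show ?thesis .
qed

lemma bw_init_upd: "bw (A\<lparr>init := i\<rparr>) p w = bw A p w"
  by (induction w arbitrary: p) auto

lemma Rev_smult:
  assumes "r \<in> Rev" shows "(\<lambda>w. c * r w) \<in> Rev"
proof -
  from assms obtain A where A: "wf_wa A" "reversible A" "behaviour A = r"
    by (auto simp: Rev_def)
  let ?B = "A\<lparr>init := (\<lambda>p. c * init A p)\<rparr>"
  have "behaviour ?B w = c * r w" for w
  proof -
    have "r w = (\<Sum>p\<in>states A. init A p * bw A p w)" using A by (metis behaviour_bw wf_wa_def)
    then show ?thesis using A by (simp add: behaviour_bw wf_wa_def bw_init_upd sum_distrib_left mult.assoc)
  qed
  moreover have "wf_wa ?B" "reversible ?B" using A by (auto simp: wf_wa_def reversible_def)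
  ultimately show ?thesis unfolding Rev_def by blast
qed

lemma Rev_zero: "(\<lambda>w. 0::'r::semiring_1) \<in> Rev"
proof -
  let ?A = "\<lparr>states = {}, trans = (\<lambda>p a q. 0), init = (\<lambda>p. 0), fin = (\<lambda>p. 0)\<rparr> :: ('a,'r) wa"
  have "behaviour ?A = (\<lambda>w. 0)" by (auto simp: behaviour_bw)
  moreover have "wf_wa ?A" "reversible ?A" by (auto simp: wf_wa_def reversible_def)
  ultimately show ?thesis unfolding Rev_def by blast
qed

definition wa_union :: "('a,'r::semiring_1) wa \<Rightarrow> ('a,'r) wa \<Rightarrow> ('a,'r) wa" where
 "wa_union A B = \<lparr>states = (\<lambda>p. 2*p) ` states A \<union> (\<lambda>p. Suc (2*p)) ` states B,
   trans = (\<lambda>p a q. if even p \<and> even q then trans A (p div 2) a (q div 2)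
       else if odd p \<and> odd q then trans B (p div 2) a (q div 2) else 0),
   init = (\<lambda>p. if even p then init A (p div 2) else init B (p div 2)),
   fin = (\<lambda>p. if even p then fin A (p div 2) else fin B (p div 2))\<rparr>"

lemma union_split:
  fixes h :: "nat \<Rightarrow> 'r::comm_monoid_add"
  assumes "finite (states A)" "finite (states B)"
  shows "(\<Sum>q\<in>states (wa_union A B). h q) = (\<Sum>q\<in>states A. h (2*q)) + (\<Sum>q\<in>states B. h (Suc (2*q)))"
proof -
  have d: "(\<lambda>p. 2*p) ` states A \<inter> (\<lambda>p. Suc (2*p)) ` states B = {}" by auto presburger
  have i1: "inj_on (\<lambda>p::nat. 2*p) X" for X by (auto simp: inj_on_def)
  have i2: "inj_on (\<lambda>p::nat. Suc (2*p)) X" for X by (auto simp: inj_on_def)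
  show ?thesis
    unfolding wa_union_def using assms d
    by (simp add: sum.union_disjoint sum.reindex[OF i1] sum.reindex[OF i2])
qed

lemma bw_union:
  assumes "finite (states A)" "finite (states B)"
  shows "bw (wa_union A B) (2*p) w = bw A p w \<and> bw (wa_union A B) (Suc (2*p)) w = bw B p w"
proof (induction w arbitrary: p)
  case Nil
  then show ?case by (simp add: wa_union_def)
next
  case (Cons a w)
  show ?case
    using Cons by (simp add: union_split[OF assms]) (simp add: wa_union_def)
qed

lemma Rev_add:
  assumes "r \<in> Rev" "s \<in> Rev" shows "(\<lambda>w. r w + s w) \<in> Rev"
proof -
  from assms obtain A B where A: "wf_wa A" "reversible A" "behaviour A = r"
    and B: "wf_wa B" "reversible B" "behaviour B = s"
    by (auto simp: Rev_def)
  have fA: "finite (states A)" and fB: "finite (states B)" using A B by (auto simp: wf_wa_def)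
  let ?U = "wa_union A B"
  have "behaviour ?U w = r w + s w" for w
  proof -
    have fU: "finite (states ?U)" using fA fB by (simp add: wa_union_def)
    have "behaviour ?U w = (\<Sum>q\<in>states A. init ?U (2*q) * bw ?U (2*q) w) + (\<Sum>q\<in>states B. init ?U (Suc (2*q)) * bw ?U (Suc (2*q)) w)"
      by (simp add: behaviour_bw[OF fU] union_split[OF fA fB])
    also have "\<dots> = behaviour A w + behaviour B w"
      by (simp add: bw_union[OF fA fB] behaviour_bw[OF fA] behaviour_bw[OF fB]) (simp add: wa_union_def)
    finally show ?thesis using A B by simp
  qed
  moreover have "wf_wa ?U" using fA fB by (simp add: wf_wa_def wa_union_def)
  moreover have "reversible ?U"
  proof -
    have st: "p \<in> states ?U \<Longrightarrow> (even p \<and> p div 2 \<in> states A) \<or> (odd p \<and> p div 2 \<in> states B)" for p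
      by (auto simp: wa_union_def)
    have tr: "trans ?U p a q \<noteq> 0 \<Longrightarrow> (even p \<and> even q \<and> trans A (p div 2) a (q div 2) \<noteq> 0) \<or> (odd p \<and> odd q \<and> trans B (p div 2) a (q div 2) \<noteq> 0)" for p a q
      by (auto simp: wa_union_def split: if_splits)
    have par: "x div 2 = y div 2 \<Longrightarrow> even x = even y \<Longrightarrow> x = y" for x y :: nat
      by (metis div_mult_mod_eq odd_iff_mod_2_eq_one even_iff_mod_2_eq_zero)
    show ?thesis
      unfolding reversible_def
    proof (intro ballI allI conjI impI)
      fix p p' q q' a
      assume "p \<in> states ?U" "p' \<in> states ?U" "q \<in> states ?U" "q' \<in> states ?U"
      note S = st[OF this(1)] st[OF this(2)] st[OF this(3)] st[OF this(4)]
      { assume h: "trans ?U p a q \<noteq> 0 \<and> trans ?U p a q' \<noteq> 0"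
        from tr[of p a q] tr[of p a q'] h S A(2) B(2) show "q = q'"
          unfolding reversible_def by (metis par) }
      { assume h: "trans ?U p a q \<noteq> 0 \<and> trans ?U p' a q \<noteq> 0"
        from tr[of p a q] tr[of p' a q] h S A(2) B(2) show "p = p'"
          unfolding reversible_def by (metis par) }
    qed
  qed
  ultimately show ?thesis unfolding Rev_def by blast
qed

lemma Rev_sum:
  assumes "finite I" "\<And>i. i \<in> I \<Longrightarrow> F i \<in> Rev"
  shows "(\<lambda>w. \<Sum>i\<in>I. F i w) \<in> Rev"
  using assms
proof (induction I rule: finite_induct)
  case empty
  then show ?case using Rev_zero by simp
next
  case (insert x I)
  then show ?case using Rev_add[of "F x" "\<lambda>w. \<Sum>i\<in>I. F i w"] by simp
qed

fun mrun :: "('x \<Rightarrow> 'a \<Rightarrow> 'x option) \<Rightarrow> 'x \<Rightarrow> 'a list \<Rightarrow> 'x option" where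
  "mrun \<delta> x [] = Some x"
| "mrun \<delta> x (a#w) = (case \<delta> x a of None \<Rightarrow> None | Some y \<Rightarrow> mrun \<delta> y w)"

lemma machine_Rev:
  fixes \<delta> :: "'x \<Rightarrow> 'a \<Rightarrow> 'x option" and g :: "'x \<Rightarrow> 'r::comm_ring_1"
  assumes fin: "finite X" and x0: "x0 \<in> X"
    and cl: "\<And>x a y. x \<in> X \<Longrightarrow> \<delta> x a = Some y \<Longrightarrow> y \<in> X"
    and inj: "\<And>x x' a y. x \<in> X \<Longrightarrow> x' \<in> X \<Longrightarrow> \<delta> x a = Some y \<Longrightarrow> \<delta> x' a = Some y \<Longrightarrow> x = x'"
  shows "(\<lambda>w. case mrun \<delta> x0 w of None \<Rightarrow> 0 | Some y \<Rightarrow> g y) \<in> Rev"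
proof -
  obtain enc :: "'x \<Rightarrow> nat" where ie: "inj_on enc X"
    using finite_imp_inj_to_nat_seg[OF fin] by blast
  define dec where "dec = the_inv_into X enc"
  have dec_enc: "x \<in> X \<Longrightarrow> dec (enc x) = x" for x
    unfolding dec_def by (rule the_inv_into_f_f[OF ie])
  define A :: "('a,'r) wa" where "A = \<lparr>states = enc ` X,
     trans = (\<lambda>p a q. if p \<in> enc ` X \<and> q \<in> enc ` X \<and> \<delta> (dec p) a = Some (dec q) then 1 else 0),
     init = (\<lambda>p. if p = enc x0 then 1 else 0),
     fin = (\<lambda>p. g (dec p))\<rparr>"
  have fA: "finite (states A)" using fin by (simp add: A_def)
  have bwA: "bw A (enc x) w = (case mrun \<delta> x w of None \<Rightarrow> 0 | Some y \<Rightarrow> g y)" if "x \<in> X" for x w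
    using that
  proof (induction w arbitrary: x)
    case Nil
    then show ?case by (simp add: A_def dec_enc)
  next
    case (Cons a w)
    have "bw A (enc x) (a#w) = (\<Sum>x'\<in>X. trans A (enc x) a (enc x') * bw A (enc x') w)"
      by (simp add: A_def sum.reindex[OF ie])
    also have "\<dots> = (\<Sum>x'\<in>X. (if \<delta> x a = Some x' then bw A (enc x') w else 0))"
      by (intro sum.cong) (auto simp: A_def dec_enc Cons.prems)
    also have "\<dots> = (case \<delta> x a of None \<Rightarrow> 0 | Some y \<Rightarrow> bw A (enc y) w)"
    proof (cases "\<delta> x a")
      case None
      then show ?thesis by simp
    next
      case (Some y)
      then have "y \<in> X" using cl Cons.prems by blast
      then show ?thesis using Some fin by simp
    qed
    also have "\<dots> = (case mrun \<delta> x (a#w) of None \<Rightarrow> 0 | Some y \<Rightarrow> g y)"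
      using Cons.IH cl Cons.prems by (auto split: option.splits)
    finally show ?case .
  qed
  have "behaviour A w = (case mrun \<delta> x0 w of None \<Rightarrow> 0 | Some y \<Rightarrow> g y)" for w
  proof -
    have "behaviour A w = (\<Sum>p\<in>enc ` X. (if p = enc x0 then bw A p w else 0))"
    proof -
      have "states A = enc ` X" "\<And>p. init A p = (if p = enc x0 then 1 else 0)" by (simp_all add: A_def)
      then show ?thesis by (simp only: behaviour_bw[OF fA]) (intro sum.cong, auto)
    qed
    also have "\<dots> = bw A (enc x0) w"
      using fin x0 by simp
    finally show ?thesis using bwA x0 by simp
  qed
  moreover have "wf_wa A" using fA by (simp add: wf_wa_def)
  moreover have "reversible A"
    unfolding reversible_def
  proof (intro ballI allI conjI impI)
    fix p p' q q' a
    assume "p \<in> states A" "p' \<in> states A" "q \<in> states A" "q' \<in> states A"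
    then obtain x x' y y' where xs: "x \<in> X" "x' \<in> X" "y \<in> X" "y' \<in> X"
      "p = enc x" "p' = enc x'" "q = enc y" "q' = enc y'" by (auto simp: A_def)
    { assume "trans A p a q \<noteq> 0 \<and> trans A p a q' \<noteq> 0"
      then have "\<delta> x a = Some y" "\<delta> x a = Some y'" using xs by (auto simp: A_def dec_enc split: if_splits)
      then show "q = q'" using xs by simp }
    { assume "trans A p a q \<noteq> 0 \<and> trans A p' a q \<noteq> 0"
      then have "\<delta> x a = Some y" "\<delta> x' a = Some y" using xs by (auto simp: A_def dec_enc split: if_splits)
      then show "p = p'" using xs inj by metis }
  qed
  ultimately show ?thesis unfolding Rev_def by blast
qed

lemma Rev_const: "(\<lambda>w. c::'r::comm_ring_1) \<in> Rev"
proof -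
  have "(\<lambda>w::'a list. case mrun (\<lambda>x a. Some x) () w of None \<Rightarrow> 0 | Some y \<Rightarrow> c) \<in> Rev"
    by (rule machine_Rev[of "{()}"]) auto
  moreover have "mrun (\<lambda>x a. Some x) () w = Some ()" for w :: "'a list"
    by (induction w) auto
  ultimately show ?thesis by simp
qed

lemma moebius_sum:
  fixes F :: "'c set \<Rightarrow> 'b::ring_1"
  assumes "finite A"
  shows "(\<Sum>S\<in>Pow A. \<Sum>T\<in>Pow S. (-1)^(card S - card T) * F T) = F A"
proof -
  have "F A = (\<Sum>S\<in>Pow A. (-1)^card S * (\<Sum>T\<in>Pow S. (-1)^card T * F T))"
    by (rule inclusion_exclusion_symmetric[OF _ assms]) simp
  also have "\<dots> = (\<Sum>S\<in>Pow A. \<Sum>T\<in>Pow S. (-1)^(card S - card T) * F T)"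
  proof (intro sum.cong refl)
    fix S assume "S \<in> Pow A"
    then have fS: "finite S" using assms finite_subset by auto
    show "(-1)^card S * (\<Sum>T\<in>Pow S. (-1)^card T * F T) = (\<Sum>T\<in>Pow S. (-1)^(card S - card T) * F T)"
      unfolding sum_distrib_left
    proof (intro sum.cong refl)
      fix T assume "T \<in> Pow S"
      then have "card T \<le> card S" using fS by (simp add: card_mono)
      then have "(-1::'b)^(card S - card T) = (-1)^(card S + card T)"
        by (simp add: neg_one_power_add_eq_neg_one_power_diff)
      then show "(-1)^card S * ((-1)^card T * F T) = (-1::'b)^(card S - card T) * F T"
        by (simp add: power_add mult.assoc)
    qed
  qed
  finally show ?thesis by simp
qed

lemma idem_pow: "\<exists>k\<ge>1. (z::'r::{monoid_mult,finite})^k * z^k = z^k"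
proof -
  have "\<not> inj (\<lambda>n::nat. z^n)"
  proof
    assume "inj (\<lambda>n::nat. z^n)"
    then have "finite (UNIV :: nat set)"
      using finite_imageD[of "\<lambda>n::nat. z^n" UNIV] by simp
    then show False by simp
  qed
  then obtain i j where ij: "i \<noteq> j" "z^i = z^j" unfolding inj_def by blast
  then obtain i d where id: "d \<ge> 1" "z^i = z^(i+d)"
    by (metis le_add_diff_inverse less_imp_le_nat linorder_neq_iff zero_less_diff less_one not_less)
  have per: "z^(n + d) = z^n" if "n \<ge> i" for n
  proof -
    have "z^(n+d) = z^(n-i) * z^(i+d)" using that by (simp flip: power_add)
    also have "\<dots> = z^(n-i) * z^i" using id by simp
    also have "\<dots> = z^n" using that by (simp flip: power_add)
    finally show ?thesis .
  qed
  have per2: "z^(n + t*d) = z^n" if "n \<ge> i" for n t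
  proof (induction t)
    case 0 then show ?case by simp
  next
    case (Suc t)
    have "z^(n + Suc t * d) = z^((n + t*d) + d)" by (simp add: algebra_simps)
    also have "\<dots> = z^(n + t*d)" using per that by simp
    finally show ?case using Suc by simp
  qed
  let ?k = "(i+1)*d"
  have "?k \<ge> i" using id(1) by (metis add_leE le_add1 mult_le_mono mult_1_right)
  moreover have "?k \<ge> 1" using id(1) by simp
  moreover have "z^?k * z^?k = z^?k"
    using per2[OF \<open>?k \<ge> i\<close>, of "i+1"] by (simp flip: power_add)
  ultimately show ?thesis by blast
qed

locale rwa =
  fixes A :: "('a, 'r::{comm_ring_1,finite}) wa" and m :: "'r \<Rightarrow> nat"
  assumes finQ: "finite (states A)" and revA: "reversible A"
    and m1: "\<And>z. m z \<ge> 1" and midem: "\<And>z. z^m z * z^m z = z^m z"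
begin

definition nxt :: "nat \<Rightarrow> 'a \<Rightarrow> nat option" where
  "nxt q a = (if \<exists>q'\<in>states A. trans A q a q' \<noteq> 0
     then Some (SOME q'. q' \<in> states A \<and> trans A q a q' \<noteq> 0) else None)"

lemma nxt_in: "nxt q a = Some q' \<Longrightarrow> q' \<in> states A \<and> trans A q a q' \<noteq> 0"
proof -
  assume h: "nxt q a = Some q'"
  then have ex: "\<exists>x. x \<in> states A \<and> trans A q a x \<noteq> 0"
    and eq: "q' = (SOME x. x \<in> states A \<and> trans A q a x \<noteq> 0)"
    by (auto simp: nxt_def split: if_splits)
  show ?thesis using someI_ex[OF ex] eq by simp
qed

lemma nxt_Some:
  assumes "q \<in> states A" "q' \<in> states A" "trans A q a q' \<noteq> 0"
  shows "nxt q a = Some q'"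
proof -
  have "\<exists>q''. nxt q a = Some q''" using assms unfolding nxt_def by auto
  then obtain q'' where "nxt q a = Some q''" by blast
  with nxt_in[OF this] assms revA show ?thesis unfolding reversible_def by metis
qed

lemma nxt_None: "nxt q a = None \<Longrightarrow> q' \<in> states A \<Longrightarrow> trans A q a q' = 0"
  unfolding nxt_def by (auto split: if_splits)

lemma nxt_inj: "q1 \<in> states A \<Longrightarrow> q2 \<in> states A \<Longrightarrow> nxt q1 a = Some q' \<Longrightarrow> nxt q2 a = Some q' \<Longrightarrow> q1 = q2"
  using nxt_in revA unfolding reversible_def by metis

lemma bw_nxt:
  assumes "q \<in> states A"
  shows "bw A q (a#w) = (case nxt q a of None \<Rightarrow> 0 | Some q' \<Rightarrow> trans A q a q' * bw A q' w)"
proof (cases "nxt q a")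
  case None
  then show ?thesis using nxt_None by simp
next
  case (Some q')
  have "bw A q (a#w) = (\<Sum>x\<in>states A. if x = q' then trans A q a q' * bw A q' w else 0)"
  proof (simp only: bw.simps, intro sum.cong refl)
    fix x assume "x \<in> states A"
    then show "trans A q a x * bw A x w = (if x = q' then trans A q a q' * bw A q' w else 0)"
      by (cases "trans A q a x = 0") (use nxt_Some[OF assms \<open>x \<in> states A\<close>] Some in auto)
  qed
  also have "\<dots> = trans A q a q' * bw A q' w" using nxt_in[OF Some] finQ by simp
  finally show ?thesis using Some by simp
qed

definition E :: "'r \<Rightarrow> 'r" where "E z = z ^ m z"

definition ac :: "'r set \<Rightarrow> 'r" where
  "ac B = (\<Prod>z\<in>B. E z) * (\<Prod>z\<in>-B. 1 - E z)"

lemma E_idem: "E z * E z = E z" by (simp add: E_def midem)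

lemma sum_ac: "(\<Sum>B\<in>UNIV. ac B) = 1"
proof -
  have "(\<Prod>z\<in>(UNIV::'r set). E z + (1 - E z)) = (\<Sum>X\<in>Pow UNIV. (\<Prod>z\<in>X. E z) * (\<Prod>z\<in>UNIV-X. 1 - E z))"
    by (rule prod_add) simp
  then show ?thesis by (simp add: ac_def Compl_eq_Diff_UNIV)
qed

lemma ac_idem: "ac B * ac B = ac B"
proof -
  have 1: "(\<Prod>z\<in>B. E z) * (\<Prod>z\<in>B. E z) = (\<Prod>z\<in>B. E z)"
    by (simp add: E_idem flip: prod.distrib)
  have "(1 - E z) * (1 - E z) = 1 - E z" for z
    using E_idem[of z] by (simp add: algebra_simps)
  then have 2: "(\<Prod>z\<in>-B. 1 - E z) * (\<Prod>z\<in>-B. 1 - E z) = (\<Prod>z\<in>-B. 1 - E z)"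
    by (simp flip: prod.distrib)
  have r: "(x*y)*(x*y) = (x*x)*(y*y)" for x y :: 'r by (simp add: algebra_simps)
  show ?thesis unfolding ac_def r 1 2 ..
qed

lemma ac_in: "z \<in> B \<Longrightarrow> ac B * E z = ac B"
proof -
  assume "z \<in> B"
  then have "(\<Prod>z\<in>B. E z) = E z * (\<Prod>x\<in>B-{z}. E x)"
    by (simp add: prod.remove)
  moreover have "(E z * R) * E z = (E z * E z) * R" for R by (simp add: algebra_simps)
  ultimately have "(\<Prod>z\<in>B. E z) * E z = (\<Prod>z\<in>B. E z)"
    using E_idem[of z] by simp
  moreover have "ac B * E z = ((\<Prod>z\<in>B. E z) * E z) * (\<Prod>z\<in>-B. 1 - E z)"
    unfolding ac_def by (simp add: algebra_simps)
  ultimately show ?thesis by (simp add: ac_def)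
qed

lemma ac_out: "z \<notin> B \<Longrightarrow> ac B * E z = 0"
proof -
  assume "z \<notin> B"
  then have "(\<Prod>z\<in>-B. 1 - E z) = (1 - E z) * (\<Prod>x\<in>-B-{z}. 1 - E x)"
    by (simp add: prod.remove)
  moreover have "(1 - E z) * E z = 0" using E_idem[of z] by (simp add: algebra_simps)
  moreover have "((1 - E z) * R) * E z = ((1 - E z) * E z) * R" for R by (simp add: algebra_simps)
  ultimately have "(\<Prod>z\<in>-B. 1 - E z) * E z = 0"
    by simp
  moreover have "ac B * E z = (\<Prod>z\<in>B. E z) * ((\<Prod>z\<in>-B. 1 - E z) * E z)"
    unfolding ac_def by (simp add: algebra_simps)
  ultimately show ?thesis by simp
qed

end

lemma absorb: "(u::'b::comm_semiring_1) * x = u \<Longrightarrow> u * t * x = u * t"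
proof -
  assume h: "u * x = u"
  have "u * t * x = (u * x) * t" by (simp add: ac_simps)
  then show ?thesis using h by simp
qed

context rwa
begin

definition V :: "'r set \<Rightarrow> (nat \<times> 'r \<times> ('r \<Rightarrow> nat)) set" where
  "V B = {(q,u,n). q \<in> states A \<and> u * ac B = u \<and> (\<forall>z. n z < m z)}"

lemma finite_V: "finite (V B)"
proof -
  have "{n::'r\<Rightarrow>nat. \<forall>z. n z < m z} \<subseteq> PiE UNIV (\<lambda>z. {..<m z})"
    by (auto simp: PiE_iff)
  then have "finite {n::'r\<Rightarrow>nat. \<forall>z. n z < m z}"
    using finite_PiE[of UNIV "\<lambda>z. {..<m z}"] finite_subset by auto
  then have "finite (states A \<times> (UNIV::'r set) \<times> {n::'r\<Rightarrow>nat. \<forall>z. n z < m z})"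
    using finQ by simp
  moreover have "V B \<subseteq> states A \<times> (UNIV::'r set) \<times> {n::'r\<Rightarrow>nat. \<forall>z. n z < m z}"
    by (auto simp: V_def)
  ultimately show ?thesis using finite_subset by blast
qed

definition tstep :: "'r set \<Rightarrow> nat \<times> 'r \<times> ('r \<Rightarrow> nat) \<Rightarrow> 'a \<Rightarrow> (nat \<times> 'r \<times> ('r \<Rightarrow> nat)) option" where
  "tstep B c a = (case c of (q,u,n) \<Rightarrow>
     (case nxt q a of None \<Rightarrow> None | Some q' \<Rightarrow>
       (if trans A q a q' \<in> B then Some (q', u * trans A q a q', n)
        else if Suc (n (trans A q a q')) < m (trans A q a q')
          then Some (q', u, n(trans A q a q' := Suc (n (trans A q a q'))))
        else None)))"

lemma tstep_V: "c \<in> V B \<Longrightarrow> tstep B c a = Some c' \<Longrightarrow> c' \<in> V B"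
  by (auto simp: V_def tstep_def nxt_in absorb split: option.splits if_splits)

lemma tstep_inj:
  assumes "c1 \<in> V B" "c2 \<in> V B" "tstep B c1 a = Some c'" "tstep B c2 a = Some c'"
  shows "c1 = c2"
proof -
  obtain q1 u1 n1 where c1: "c1 = (q1,u1,n1)" by (cases c1) auto
  obtain q2 u2 n2 where c2: "c2 = (q2,u2,n2)" by (cases c2) auto
  obtain q1' where n1: "nxt q1 a = Some q1'" using assms(3) c1 by (auto simp: tstep_def split: option.splits)
  obtain q2' where n2: "nxt q2 a = Some q2'" using assms(4) c2 by (auto simp: tstep_def split: option.splits)
  have "q1' = fst c'" using assms(3) c1 n1 by (auto simp: tstep_def split: if_splits)
  moreover have "q2' = fst c'" using assms(4) c2 n2 by (auto simp: tstep_def split: if_splits)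
  ultimately have q: "q1 = q2" using nxt_inj n1 n2 assms(1,2) c1 c2 by (auto simp: V_def)
  then have q': "q1' = q2'" using n1 n2 by simp
  define z where "z = trans A q1 a q1'"
  have u1: "u1 * ac B = u1" and u2: "u2 * ac B = u2" using assms(1,2) c1 c2 by (auto simp: V_def)
  show ?thesis
  proof (cases "z \<in> B")
    case True
    then have "u1 * z = u2 * z" "n1 = n2"
      using assms(3,4) c1 c2 n1 n2 q q' by (auto simp: tstep_def z_def)
    have key: "u * ac B = u \<Longrightarrow> u = (u * z) * z ^ (m z - 1)" for u
    proof -
      assume h: "u * ac B = u"
      have "u * E z = (u * ac B) * E z" using h by simp
      also have "\<dots> = u * (ac B * E z)" by (simp add: mult.assoc)
      also have "\<dots> = u" using ac_in[OF True] h by simp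
      finally have "u = u * z ^ m z" by (simp add: E_def)
      also have "\<dots> = u * (z * z ^ (m z - 1))" using m1[of z]
        by (metis Suc_diff_le diff_Suc_1 power_Suc)
      finally show ?thesis by (simp add: mult.assoc)
    qed
    have "u1 = u2" using key[OF u1] key[OF u2] \<open>u1 * z = u2 * z\<close> by simp
    then show ?thesis using c1 c2 q \<open>n1 = n2\<close> by simp
  next
    case False
    then have "u1 = u2" "n1(z := Suc (n1 z)) = n2(z := Suc (n2 z))"
      using assms(3,4) c1 c2 n1 n2 q q' by (auto simp: tstep_def z_def split: if_splits)
    then have "n1 = n2"
      by (metis fun_upd_eqD fun_upd_idem_iff fun_upd_upd nat.inject)
    then show ?thesis using c1 c2 q \<open>u1 = u2\<close> by simp
  qed
qed

definition P :: "('r \<Rightarrow> nat) \<Rightarrow> 'r" where "P n = (\<Prod>z\<in>UNIV. z ^ n z)"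

lemma P_split: "P n = z ^ n z * (\<Prod>x\<in>UNIV-{z}. x ^ n x)"
  unfolding P_def by (simp add: prod.remove)

lemma P_upd: "P (n(z := Suc (n z))) = z * P n"
proof -
  have "(\<Prod>x\<in>UNIV-{z}. x ^ (n(z := Suc (n z))) x) = (\<Prod>x\<in>UNIV-{z}. x ^ n x)"
    by (intro prod.cong) auto
  then show ?thesis using P_split[of "n(z := Suc (n z))" z] P_split[of n z] by simp
qed

lemma P_zero: "P (\<lambda>_. 0) = 1" by (simp add: P_def)

definition tv :: "nat \<times> 'r \<times> ('r \<Rightarrow> nat) \<Rightarrow> 'r" where
  "tv c = (case c of (q,u,n) \<Rightarrow> u * P n * fin A q)"

lemma thread_sem:
  assumes "c \<in> V B"
  shows "(case mrun (tstep B) c w of None \<Rightarrow> 0 | Some c' \<Rightarrow> tv c') = (case c of (q,u,n) \<Rightarrow> u * P n * bw A q w)"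
  using assms
proof (induction w arbitrary: c)
  case Nil
  then show ?case by (auto simp: tv_def)
next
  case (Cons a w)
  obtain q u n where c: "c = (q,u,n)" by (cases c) auto
  have q: "q \<in> states A" and u: "u * ac B = u" and nm: "\<forall>z. n z < m z"
    using Cons.prems c by (auto simp: V_def)
  show ?case
  proof (cases "nxt q a")
    case None
    then show ?thesis using c q bw_nxt[OF q, of a w] by (simp add: tstep_def del: bw.simps)
  next
    case (Some q')
    define z where "z = trans A q a q'"
    have bwc: "bw A q (a#w) = z * bw A q' w" using bw_nxt[OF q] Some by (simp add: z_def)
    show ?thesis
    proof (cases "z \<in> B")
      case True
      then have ts: "tstep B c a = Some (q', u * z, n)" using c Some by (simp add: tstep_def z_def)
      have "(q', u * z, n) \<in> V B" using tstep_V[OF Cons.prems ts] .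
      from Cons.IH[OF this] show ?thesis using ts c bwc by (simp add: algebra_simps)
    next
      case False
      show ?thesis
      proof (cases "Suc (n z) < m z")
        case True
        then have ts: "tstep B c a = Some (q', u, n(z := Suc (n z)))" using c Some False
          by (simp add: tstep_def z_def)
        have "(q', u, n(z := Suc (n z))) \<in> V B" using tstep_V[OF Cons.prems ts] .
        from Cons.IH[OF this] show ?thesis using ts c bwc by (simp add: P_upd algebra_simps)
      next
        case F2: False
        then have ts: "tstep B c a = None" using c Some False by (simp add: tstep_def z_def)
        have "u * z ^ m z = 0" using u ac_out[OF False] by (metis E_def mult.assoc mult_zero_right)
        moreover have "z ^ Suc (n z) = z ^ m z * z ^ (Suc (n z) - m z)"
          using F2 by (simp flip: power_add)
        ultimately have "u * z ^ Suc (n z) = 0" by (simp add: mult.assoc[symmetric])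
        moreover have "u * P n * z = (u * z ^ Suc (n z)) * (\<Prod>x\<in>UNIV-{z}. x ^ n x)"
          using P_split[of n z] by (simp add: algebra_simps)
        ultimately have "u * P n * z = 0" by simp
        moreover have "u * P n * bw A q (a#w) = (u * P n * z) * bw A q' w"
          by (simp only: bwc mult.assoc)
        ultimately show ?thesis using ts c by (simp del: bw.simps)
      qed
    qed
  qed
qed

end

context rwa
begin

definition J :: "(nat \<times> 'r set) set" where "J = states A \<times> UNIV"

lemma finite_J: "finite J" using finQ by (simp add: J_def)

definition st :: "nat \<times> 'r set \<Rightarrow> nat \<times> 'r \<times> ('r \<Rightarrow> nat)" where
  "st j = (fst j, ac (snd j), \<lambda>_. 0)"

lemma st_V: "fst j \<in> states A \<Longrightarrow> st j \<in> V (snd j)"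
  using m1 by (auto simp: st_def V_def ac_idem Suc_le_eq)

lemma decomp:
  "(\<Sum>p\<in>states A. init A p * bw A p w)
   = (\<Sum>j\<in>J. init A (fst j) * (case mrun (tstep (snd j)) (st j) w of None \<Rightarrow> 0 | Some c \<Rightarrow> tv c))"
proof -
  have "(\<Sum>j\<in>J. init A (fst j) * (case mrun (tstep (snd j)) (st j) w of None \<Rightarrow> 0 | Some c \<Rightarrow> tv c))
      = (\<Sum>j\<in>J. init A (fst j) * (ac (snd j) * bw A (fst j) w))"
  proof (intro sum.cong refl)
    fix j assume "j \<in> J"
    then have "st j \<in> V (snd j)" using st_V by (auto simp: J_def)
    from thread_sem[OF this, of w]
    show "init A (fst j) * (case mrun (tstep (snd j)) (st j) w of None \<Rightarrow> 0 | Some c \<Rightarrow> tv c)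
        = init A (fst j) * (ac (snd j) * bw A (fst j) w)"
      by (simp add: st_def P_zero)
  qed
  also have "\<dots> = (\<Sum>p\<in>states A. \<Sum>B\<in>UNIV. init A p * (ac B * bw A p w))"
    unfolding J_def by (simp add: sum.cartesian_product split_def)
  also have "\<dots> = (\<Sum>p\<in>states A. init A p * (\<Sum>B\<in>UNIV. ac B) * bw A p w)"
    by (simp add: sum_distrib_left sum_distrib_right mult.assoc)
  also have "\<dots> = (\<Sum>p\<in>states A. init A p * bw A p w)"
    by (simp add: sum_ac)
  finally show ?thesis by simp
qed

definition dS :: "(nat \<times> 'r set) set \<Rightarrow> ((nat \<times> 'r set) \<Rightarrow> (nat \<times> 'r \<times> ('r \<Rightarrow> nat))) \<Rightarrow> 'a
    \<Rightarrow> ((nat \<times> 'r set) \<Rightarrow> (nat \<times> 'r \<times> ('r \<Rightarrow> nat))) option" where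
  "dS S c a = (if \<forall>j\<in>S. tstep (snd j) (c j) a \<noteq> None
     then Some (\<lambda>j. if j \<in> S then the (tstep (snd j) (c j) a) else undefined) else None)"

definition XS :: "(nat \<times> 'r set) set \<Rightarrow> ((nat \<times> 'r set) \<Rightarrow> (nat \<times> 'r \<times> ('r \<Rightarrow> nat))) set" where
  "XS S = PiE S (\<lambda>j. V (snd j))"

lemma dS_closed: "c \<in> XS S \<Longrightarrow> dS S c a = Some c' \<Longrightarrow> c' \<in> XS S"
proof -
  assume c: "c \<in> XS S" and d: "dS S c a = Some c'"
  then have ne: "\<forall>j\<in>S. tstep (snd j) (c j) a \<noteq> None"
    and c': "c' = (\<lambda>j. if j \<in> S then the (tstep (snd j) (c j) a) else undefined)"
    by (auto simp: dS_def split: if_splits)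
  have "c' j \<in> V (snd j)" if "j \<in> S" for j
  proof -
    have "tstep (snd j) (c j) a = Some (c' j)" using ne that c' by auto
    moreover have "c j \<in> V (snd j)" using c that by (auto simp: XS_def)
    ultimately show ?thesis using tstep_V by blast
  qed
  then show ?thesis using c' by (auto simp: XS_def PiE_iff extensional_def)
qed

lemma dS_inj:
  assumes "c1 \<in> XS S" "c2 \<in> XS S" "dS S c1 a = Some y" "dS S c2 a = Some y"
  shows "c1 = c2"
proof (rule ext)
  fix j
  show "c1 j = c2 j"
  proof (cases "j \<in> S")
    case True
    from assms(3) True have "tstep (snd j) (c1 j) a \<noteq> None" "y j = the (tstep (snd j) (c1 j) a)"
      by (auto simp: dS_def split: if_splits)
    moreover from assms(4) True have "tstep (snd j) (c2 j) a \<noteq> None" "y j = the (tstep (snd j) (c2 j) a)"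
      by (auto simp: dS_def split: if_splits)
    ultimately have "tstep (snd j) (c1 j) a = Some (y j)" "tstep (snd j) (c2 j) a = Some (y j)"
      by auto
    moreover have "c1 j \<in> V (snd j)" "c2 j \<in> V (snd j)" using assms(1,2) True by (auto simp: XS_def)
    ultimately show ?thesis using tstep_inj by blast
  next
    case False
    have "c1 j = undefined" using PiE_arb[OF assms(1)[unfolded XS_def] False] .
    moreover have "c2 j = undefined" using PiE_arb[OF assms(2)[unfolded XS_def] False] .
    ultimately show ?thesis by simp
  qed
qed

lemma finite_XS: "finite S \<Longrightarrow> finite (XS S)"
  unfolding XS_def by (rule finite_PiE) (auto simp: finite_V)

lemma mrun_S:
  "c \<in> XS S \<Longrightarrow> mrun (dS S) c w = (if \<forall>j\<in>S. mrun (tstep (snd j)) (c j) w \<noteq> None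
     then Some (\<lambda>j. if j \<in> S then the (mrun (tstep (snd j)) (c j) w) else undefined) else None)"
proof (induction w arbitrary: c)
  case Nil
  then have "(\<lambda>j. if j \<in> S then the (mrun (tstep (snd j)) (c j) []) else undefined) = c"
    by (auto simp: XS_def PiE_iff extensional_def)
  then show ?case by simp
next
  case (Cons a w)
  show ?case
  proof (cases "\<forall>j\<in>S. tstep (snd j) (c j) a \<noteq> None")
    case False
    then obtain j where j: "j \<in> S" "tstep (snd j) (c j) a = None" by blast
    have c1: "\<not> (\<forall>j\<in>S. mrun (tstep (snd j)) (c j) (a#w) \<noteq> None)"
      using j by (metis mrun.simps(2) option.simps(4))
    have "dS S c a = None" using False by (simp add: dS_def)
    then show ?thesis unfolding if_not_P[OF c1] by simp
  next
    case True
    define c' where "c' = (\<lambda>j. if j \<in> S then the (tstep (snd j) (c j) a) else undefined)"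
    have d: "dS S c a = Some c'" using True by (simp add: dS_def c'_def)
    have c'X: "c' \<in> XS S" using dS_closed[OF Cons.prems d] .
    have ts: "j \<in> S \<Longrightarrow> tstep (snd j) (c j) a = Some (c' j)" for j using True by (auto simp: c'_def)
    have "mrun (dS S) c (a#w) = mrun (dS S) c' w" using d by simp
    also have "\<dots> = (if \<forall>j\<in>S. mrun (tstep (snd j)) (c' j) w \<noteq> None
     then Some (\<lambda>j. if j \<in> S then the (mrun (tstep (snd j)) (c' j) w) else undefined) else None)"
      using Cons.IH[OF c'X] .
    also have "\<dots> = (if \<forall>j\<in>S. mrun (tstep (snd j)) (c j) (a#w) \<noteq> None
     then Some (\<lambda>j. if j \<in> S then the (mrun (tstep (snd j)) (c j) (a#w)) else undefined) else None)"
    proof -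
      have eq: "j \<in> S \<Longrightarrow> mrun (tstep (snd j)) (c j) (a#w) = mrun (tstep (snd j)) (c' j) w" for j
        using ts by simp
      have fe: "(\<lambda>j. if j \<in> S then the (mrun (tstep (snd j)) (c' j) w) else undefined)
          = (\<lambda>j. if j \<in> S then the (mrun (tstep (snd j)) (c j) (a#w)) else undefined)"
        by (rule ext) (simp add: eq del: mrun.simps)
      have cond: "(\<forall>j\<in>S. mrun (tstep (snd j)) (c' j) w \<noteq> None) = (\<forall>j\<in>S. mrun (tstep (snd j)) (c j) (a#w) \<noteq> None)"
        by (rule ball_cong[OF refl]) (simp add: eq del: mrun.simps)
      show ?thesis by (simp only: fe cond)
    qed
    finally show ?thesis .
  qed
qed

end

context rwa
begin

definition hS :: "('r \<Rightarrow> 'r) \<Rightarrow> (nat \<times> 'r set) set \<Rightarrow> ((nat \<times> 'r set) \<Rightarrow> (nat \<times> 'r \<times> ('r \<Rightarrow> nat))) \<Rightarrow> 'r" where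
  "hS f S c = (\<Sum>T\<in>Pow S. (-1)^(card S - card T) * f (\<Sum>j\<in>T. init A (fst j) * tv (c j)))"

lemma comp_Rev: "(\<lambda>w. (f::'r \<Rightarrow> 'r) (\<Sum>p\<in>states A. init A p * bw A p w)) \<in> Rev"
proof -
  define MS where "MS S w = (case mrun (dS S) (\<lambda>j. if j \<in> S then st j else undefined) w of None \<Rightarrow> 0 | Some c \<Rightarrow> hS f S c)" for S w
  have MSRev: "MS S \<in> Rev" if "S \<in> Pow J" for S
  proof -
    have fS: "finite S" using that finite_J finite_subset by auto
    have "(\<lambda>j. if j \<in> S then st j else undefined) \<in> XS S"
      using that st_V by (auto simp: XS_def J_def PiE_iff extensional_def)
    then have "(\<lambda>w. case mrun (dS S) (\<lambda>j. if j \<in> S then st j else undefined) w of None \<Rightarrow> 0 | Some c \<Rightarrow> hS f S c) \<in> Rev"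
      by (rule machine_Rev[OF finite_XS[OF fS]]) (auto intro: dS_closed dS_inj)
    then show ?thesis unfolding MS_def by simp
  qed
  have "(\<lambda>w. \<Sum>S\<in>Pow J. MS S w) \<in> Rev"
    by (rule Rev_sum) (use finite_J MSRev in auto)
  moreover have "f (\<Sum>p\<in>states A. init A p * bw A p w) = (\<Sum>S\<in>Pow J. MS S w)" for w
  proof -
    define al where "al = {j\<in>J. mrun (tstep (snd j)) (st j) w \<noteq> None}"
    define cf where "cf j = the (mrun (tstep (snd j)) (st j) w)" for j
    define F where "F T = f (\<Sum>j\<in>T. init A (fst j) * tv (cf j))" for T
    have alJ: "al \<subseteq> J" by (auto simp: al_def)
    have fal: "finite al" using finite_subset[OF alJ finite_J] .
    have MSv: "MS S w = (if S \<subseteq> al then (\<Sum>T\<in>Pow S. (-1)^(card S - card T) * F T) else 0)"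
      if "S \<in> Pow J" for S
    proof -
      have X: "(\<lambda>j. if j \<in> S then st j else undefined) \<in> XS S"
        using that st_V by (auto simp: XS_def J_def PiE_iff extensional_def)
      have cond: "(\<forall>j\<in>S. mrun (tstep (snd j)) ((\<lambda>j. if j \<in> S then st j else undefined) j) w \<noteq> None) = (S \<subseteq> al)"
        using that by (auto simp: al_def)
      show ?thesis
      proof (cases "S \<subseteq> al")
        case True
        have "MS S w = hS f S (\<lambda>j. if j \<in> S then the (mrun (tstep (snd j)) (st j) w) else undefined)"
        proof -
          have fe: "(\<lambda>j. if j \<in> S then the (mrun (tstep (snd j)) (if j \<in> S then st j else undefined) w) else undefined)
             = (\<lambda>j. if j \<in> S then the (mrun (tstep (snd j)) (st j) w) else undefined)"
            by (rule ext) simp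
          show ?thesis unfolding MS_def mrun_S[OF X] using True cond by (simp add: fe)
        qed
        also have "\<dots> = (\<Sum>T\<in>Pow S. (-1)^(card S - card T) * F T)"
          unfolding hS_def F_def cf_def
          by (intro sum.cong refl arg_cong2[where f = "(*)"] arg_cong[where f = f]) auto
        finally show ?thesis using True by simp
      next
        case False
        then have nc: "\<not> (\<forall>j\<in>S. mrun (tstep (snd j)) ((\<lambda>j. if j \<in> S then st j else undefined) j) w \<noteq> None)"
          using cond by simp
        show ?thesis unfolding MS_def mrun_S[OF X] if_not_P[OF nc] using False by simp
      qed
    qed
    have "(\<Sum>S\<in>Pow J. MS S w) = (\<Sum>S\<in>Pow J. if S \<subseteq> al then (\<Sum>T\<in>Pow S. (-1)^(card S - card T) * F T) else 0)"
      by (intro sum.cong refl) (simp add: MSv)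
    also have "\<dots> = (\<Sum>S\<in>{S\<in>Pow J. S \<subseteq> al}. \<Sum>T\<in>Pow S. (-1)^(card S - card T) * F T)"
      by (rule sum.inter_filter[symmetric]) (simp add: finite_J)
    also have "{S\<in>Pow J. S \<subseteq> al} = Pow al" using alJ by auto
    also have "(\<Sum>S\<in>Pow al. \<Sum>T\<in>Pow S. (-1)^(card S - card T) * F T) = F al"
      by (rule moebius_sum[OF fal])
    also have "F al = f (\<Sum>p\<in>states A. init A p * bw A p w)"
    proof -
      have "(\<Sum>p\<in>states A. init A p * bw A p w)
         = (\<Sum>j\<in>J. init A (fst j) * (case mrun (tstep (snd j)) (st j) w of None \<Rightarrow> 0 | Some c \<Rightarrow> tv c))"
        by (rule decomp)
      also have "\<dots> = (\<Sum>j\<in>al. init A (fst j) * tv (cf j))"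
        by (rule sum.mono_neutral_cong_right[OF finite_J alJ]) (auto simp: al_def cf_def split: option.splits)
      finally show ?thesis by (simp add: F_def)
    qed
    finally show ?thesis by simp
  qed
  ultimately show ?thesis by simp
qed

end

lemma Rev_comp:
  fixes s :: "'a list \<Rightarrow> 'r::{comm_ring_1,finite}"
  assumes "s \<in> Rev"
  shows "(\<lambda>w. (f::'r \<Rightarrow> 'r) (s w)) \<in> Rev"
proof -
  from assms obtain A :: "('a,'r) wa" where A: "wf_wa A" "reversible A" "behaviour A = s"
    by (auto simp: Rev_def)
  have "\<forall>z::'r. \<exists>k\<ge>1. z^k * z^k = z^k" using idem_pow by blast
  then obtain m :: "'r \<Rightarrow> nat" where m: "\<And>z. m z \<ge> 1 \<and> z^m z * z^m z = z^m z" by metis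
  interpret rwa A m
    using A m by unfold_locales (auto simp: wf_wa_def)
  have "s = (\<lambda>w. \<Sum>p\<in>states A. init A p * bw A p w)"
    using A by (auto simp: behaviour_bw wf_wa_def)
  then show ?thesis using comp_Rev[of f] by simp
qed

theorem proposition7:
  fixes r :: "'a::finite list \<Rightarrow> 'r::{comm_ring_1, finite}"
  assumes "rational r"
  shows "r \<in> Rev \<longleftrightarrow>
           (\<forall>x::'r. supp (\<lambda>w. r w + x) \<in> RevL TYPE('r))"
proof
  assume r: "r \<in> Rev"
  show "\<forall>x::'r. supp (\<lambda>w. r w + x) \<in> RevL TYPE('r)"
  proof
    fix x :: 'r
    have "(\<lambda>w. r w + x) \<in> Rev" using Rev_add[OF r Rev_const[of x]] by simp
    then show "supp (\<lambda>w. r w + x) \<in> RevL TYPE('r)" unfolding RevL_def by blast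
  qed
next
  assume h: "\<forall>x::'r. supp (\<lambda>w. r w + x) \<in> RevL TYPE('r)"
  have "\<forall>y::'r. \<exists>s::'a list \<Rightarrow> 'r. s \<in> Rev \<and> supp (\<lambda>w. r w + - y) = supp s"
    using h unfolding RevL_def by blast
  then obtain s :: "'r \<Rightarrow> 'a list \<Rightarrow> 'r" where s: "\<And>y. s y \<in> Rev \<and> supp (\<lambda>w. r w + - y) = supp (s y)"
    by metis
  have z: "s y w = 0 \<longleftrightarrow> r w = y" for y w
  proof -
    have "s y w = 0 \<longleftrightarrow> w \<notin> supp (s y)" by (simp add: supp_def)
    also have "\<dots> \<longleftrightarrow> w \<notin> supp (\<lambda>w. r w + - y)" using s by simp
    also have "\<dots> \<longleftrightarrow> r w = y" by (simp add: supp_def)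
    finally show ?thesis .
  qed
  have "(\<lambda>w. \<Sum>y\<in>UNIV. (\<lambda>x. if x = 0 then y else 0) (s y w)) \<in> Rev"
    by (rule Rev_sum) (auto intro: Rev_comp s[THEN conjunct1])
  moreover have "(\<lambda>w. \<Sum>y\<in>UNIV. (\<lambda>x. if x = 0 then y else 0) (s y w)) = r"
  proof
    fix w
    have "(\<Sum>y\<in>UNIV. (\<lambda>x. if x = 0 then y else 0) (s y w)) = (\<Sum>y\<in>UNIV. if r w = y then y else 0)"
      by (intro sum.cong refl) (simp add: z)
    also have "\<dots> = r w" by simp
    finally show "(\<Sum>y\<in>UNIV. (\<lambda>x. if x = 0 then y else 0) (s y w)) = r w" .
  qed
  ultimately show "r \<in> Rev" by simp
qed

end
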